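(* Let $S$ be an idempotent $\omega$-continuous semiring, $\mathcal X$ a finite set of variables, and $\vec f=(f_x)_{x\in\mathcal X}$ a vector of polynomials over $S$ in $\mathcal X$ in which every monomial contains at least one variable. Let $M^{(0)}=\widehat{\vec f}$ and $M^{(n+1)}=\mathrm{eval}_{M^{(n)}}(M^{(n)})$. Then for every $n\in\mathbb N$ and every $x\in\mathcal X$, $$M^{(n)}_x\;=\;\bigoplus_{t\in T_x^{\le 2^n}}\llbracket \mathrm{yield}(t)\rrbracket$$ as functions $S^{\mathcal X}\to S$.
   Context: Semiring notions: a semiring $(S,\oplus,\odot,0,1)$; natural order $a\le a\oplus b$; $\omega$-continuous: naturally ordered, chains have suprema, countable sums $\bigoplus_{i}a_i:=\sup_i(a_0\oplus\cdots\oplus a_i)$ commute with $\odot$ on both sides and are invariant under partitioning of the index set; idempotent: $a\oplus a=a$. Monomials are words $a_1x_{i_1}\cdots a_lx_{i_l}a_{l+1}$ ($a_j\in S$, $x_{i_j}\in\mathcal X$), polynomials finite sums of monomials; they are interpreted as functions $S^{\mathcal X}\to S$, and functions $S^{\mathcal X}\to S$ (and vectors of them) form a semiring under pointwise operations. For a vector $\vec v=(v_y)_{y\in\mathcal X}$ of functions and a function $g$, $\mathrm{eval}_{\vec v}(g)(\vec c)=g(v_{y}(\vec c))_{y\in\mathcal X}$ (composition), applied componentwise to vectors. Linear completion: a substitution $\{x\mapsto g\}$ applied to a polynomial $h$ yields the set $h\{x\mapsto g\}$ of polynomials obtained by replacing exactly one occurrence of $x$ in $h$ by $g$. Linear polynomial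 substitutions for $x$ are $\{x\mapsto x\}$ or $\{x\mapsto g\}$ with $g\in f_x\sigma_y$ for some variable $y$ and linear polynomial substitution $\sigma_y$ for $y$ (mutual induction). $\widehat{\vec f}$ is the vector with components $\widehat{f_x}=\bigoplus_{\sigma_x}x\sigma_x$, where $x\{x\mapsto g\}=g$ and the sum ranges over all linear polynomial substitutions for $x$. Derivation trees: associate with $\vec f$ the context-free grammar $G_{\vec f}$ with non-terminals $\mathcal X$, terminals the semiring elements, and a production $y\to w(m)$ for each monomial $m$ of $f_y$, where $w(m)$ is $m$ read as a word over $S\cup\mathcal X$. A derivation tree from $x$ (variables allowed at leaves) is a finite ordered tree whose root is labeled $x$, each inner node is labeled by a variable $y$ with children labeled, left to right, by the symbols of $w(m)$ for a production $y\to w(m)$, and each leaf is labeled by a semiring element or a variable. $\mathrm{yield}(t)$ is the word of leaf labels read left to right, and $\llbracket w\rrbracket$ is the monomial obtained by reading concatenation as $\odot$. $T_x^{\le k}$ is the set of derivation trees from $x$ of dimension at most $k$, where dimension is: $0$ for a leaf; $\dim$ of the child if exactly one child; otherwise, with $t_1,t_2$ children of highest and second-highest dimension, $\dim(t_1)+1$ if $\dim(t_1)=\dim(t_2)$ and $\dim(t_1)$ if $\dim(t_1)>\dim(t_2)$. *)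

theory Defs
  imports Main "HOL-Library.Countable_Set"
begin

definition natord :: "'a::plus \<Rightarrow> 'a \<Rightarrow> bool" where
  "natord a b \<longleftrightarrow> (\<exists>c. a + c = b)"

definition is_sup :: "'a::plus set \<Rightarrow> 'a \<Rightarrow> bool" where
  "is_sup A u \<longleftrightarrow> (\<forall>a\<in>A. natord a u) \<and> (\<forall>v. (\<forall>a\<in>A. natord a v) \<longrightarrow> natord u v)"

definition csum :: "(nat \<Rightarrow> 'a::comm_monoid_add) \<Rightarrow> 'a" where
  "csum a = (THE u. is_sup (range (\<lambda>n. \<Sum>i\<le>n. a i)) u)"

definition ssum :: "('i \<Rightarrow> 'a::comm_monoid_add) \<Rightarrow> 'i set \<Rightarrow> 'a" where
  "ssum f A = (if finite A then sum f A else csum (\<lambda>n. f (from_nat_into A n)))"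

text \<open>The axioms of an omega-continuous semiring (the semiring laws come from the
  type class; zero_neq_one is deliberately not required), stated for the type 's.\<close>
definition omega_continuous :: "'s::{semiring_0,monoid_mult} itself \<Rightarrow> bool" where
  "omega_continuous _ \<longleftrightarrow>
     (\<forall>a b :: 's. natord a b \<longrightarrow> natord b a \<longrightarrow> a = b) \<and>
     (\<forall>s :: nat \<Rightarrow> 's. (\<forall>i. natord (s i) (s (Suc i))) \<longrightarrow> (\<exists>u. is_sup (range s) u)) \<and>
     (\<forall>(c::'s) a. c * csum a = csum (\<lambda>i. c * a i)) \<and>
     (\<forall>(c::'s) a. csum a * c = csum (\<lambda>i. a i * c)) \<and>
     (\<forall>(a :: nat \<Rightarrow> 's) (J :: nat set) (P :: nat \<Rightarrow> nat set).
        (\<forall>i\<in>J. \<forall>j\<in>J. i \<noteq> j \<longrightarrow> P i \<inter> P j = {}) \<longrightarrow> (\<Union>j\<in>J. P j) = UNIV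
        \<longrightarrow> csum a = ssum (\<lambda>j. ssum a (P j)) J)"

definition idempotent_semiring :: "'s::{semiring_0,monoid_mult} itself \<Rightarrow> bool" where
  "idempotent_semiring _ \<longleftrightarrow> (\<forall>a :: 's. a + a = a)"

datatype ('s, 'x) sym = Cst 's | Vr 'x

type_synonym ('s, 'x) mono = "('s, 'x) sym list"
type_synonym ('s, 'x) poly = "('s, 'x) mono set"

fun is_monomial :: "('s, 'x) mono \<Rightarrow> bool" where
  "is_monomial [Cst a] = True"
| "is_monomial (Cst a # Vr y # w) = is_monomial w"
| "is_monomial _ = False"

fun symval :: "('s::monoid_mult, 'x) sym \<Rightarrow> ('x \<Rightarrow> 's) \<Rightarrow> 's" where
  "symval (Cst a) c = a"
| "symval (Vr y) c = c y"

definition wval :: "('s::monoid_mult, 'x) mono \<Rightarrow> ('x \<Rightarrow> 's) \<Rightarrow> 's" where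
  "wval w c = foldr (\<lambda>s r. symval s c * r) w 1"

definition peval :: "('s::{monoid_mult,comm_monoid_add}, 'x) poly \<Rightarrow> ('x \<Rightarrow> 's) \<Rightarrow> 's" where
  "peval p c = (\<Sum>m\<in>p. wval m c)"

text \<open>h{y |-> g}: replace exactly one occurrence of y in h by g.\<close>
definition subst1 :: "('s, 'x) poly \<Rightarrow> 'x \<Rightarrow> ('s, 'x) poly \<Rightarrow> ('s, 'x) poly set" where
  "subst1 h y g = {(h - {m}) \<union> {u @ m' @ v | m'. m' \<in> g} | m u v. m \<in> h \<and> m = u @ Vr y # v}"

text \<open>lin_sub f x g: {x |-> g} is a linear polynomial substitution for x.\<close>
inductive lin_sub :: "('x \<Rightarrow> ('s, 'x) poly) \<Rightarrow> 'x \<Rightarrow> ('s, 'x) poly \<Rightarrow> bool" for f where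
  lin_id: "lin_sub f x {[Vr x]}"
| lin_step: "lin_sub f y g' \<Longrightarrow> g \<in> subst1 (f x) y g' \<Longrightarrow> lin_sub f x g"

definition lin_completion :: "('x \<Rightarrow> ('s::{monoid_mult,comm_monoid_add}, 'x) poly) \<Rightarrow> 'x \<Rightarrow> (('x \<Rightarrow> 's) \<Rightarrow> 's)" where
  "lin_completion f x = (\<lambda>c. ssum (\<lambda>g. peval g c) {g. lin_sub f x g})"

primrec Mseq :: "('x \<Rightarrow> ('s::{monoid_mult,comm_monoid_add}, 'x) poly) \<Rightarrow> nat \<Rightarrow> 'x \<Rightarrow> (('x \<Rightarrow> 's) \<Rightarrow> 's)" where
  "Mseq f 0 = lin_completion f"
| "Mseq f (Suc n) = (\<lambda>x c. Mseq f n x (\<lambda>y. Mseq f n y c))"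

datatype ('s, 'x) dtree = Leaf "('s, 'x) sym" | Node 'x "('s, 'x) dtree list"

fun label :: "('s, 'x) dtree \<Rightarrow> ('s, 'x) sym" where
  "label (Leaf s) = s"
| "label (Node y ts) = Vr y"

fun wf_tree :: "('x \<Rightarrow> ('s, 'x) poly) \<Rightarrow> ('s, 'x) dtree \<Rightarrow> bool" where
  "wf_tree f (Leaf s) = True"
| "wf_tree f (Node y ts) = (map label ts \<in> f y \<and> (\<forall>t\<in>set ts. wf_tree f t))"

definition dtrees :: "('x \<Rightarrow> ('s, 'x) poly) \<Rightarrow> 'x \<Rightarrow> ('s, 'x) dtree set" where
  "dtrees f x = {t. label t = Vr x \<and> wf_tree f t}"

fun yield :: "('s, 'x) dtree \<Rightarrow> ('s, 'x) sym list" where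
  "yield (Leaf s) = [s]"
| "yield (Node y ts) = concat (map yield ts)"

fun dim :: "('s, 'x) dtree \<Rightarrow> nat" where
  "dim (Leaf s) = 0"
| "dim (Node y ts) =
     (let ds = rev (sort (map dim ts)) in
      if ds = [] then 0
      else if length ds = 1 then ds ! 0
      else if ds ! 0 = ds ! 1 then ds ! 0 + 1 else ds ! 0)"

end

theory Submission
  imports Defs "HOL-Library.Multiset"
begin


lemma count_le1_iff:
  "count (mset L) m \<le> 1 \<longleftrightarrow> (\<forall>i<length L. \<forall>j<length L. i \<noteq> j \<longrightarrow> L!i = m \<longrightarrow> L!j \<noteq> m)"
proof -
  have "count (mset L) m = card {i. i < length L \<and> L!i = m}"
  proof -
    have "count_list L m = length (filter (\<lambda>x. x = m) L)" by (induction L) auto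
    then show ?thesis by (simp add: count_mset length_filter_conv_card)
  qed
  moreover have "card {i. i < length L \<and> L!i = m} \<le> Suc 0 \<longleftrightarrow> (\<forall>a1\<in>{i. i < length L \<and> L!i = m}. \<forall>a2\<in>{i. i < length L \<and> L!i = m}. a1 = a2)"
    by (rule card_le_Suc0_iff_eq) simp
  ultimately show ?thesis by auto
qed

lemma F_le:
  assumes "sorted_wrt (\<ge>) s"
  shows "(if s = [] then 0 else if length s = 1 then s!0 else if s!0 = s!1 then s!0+1 else s!0) \<le> m
     \<longleftrightarrow> (\<forall>x\<in>set s. x \<le> m) \<and> count (mset s) (m::nat) \<le> 1"
proof (cases s)
  case Nil then show ?thesis by simp
next
  case (Cons a r)
  show ?thesis
  proof (cases r)
    case Nil then show ?thesis using Cons by auto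
  next
    case (Cons b r')
    have ab: "b \<le> a" and br: "\<forall>x\<in>set r'. x \<le> b" using assms \<open>s = a # r\<close> Cons by auto
    have c0: "x > b \<Longrightarrow> count (mset r') x = 0" for x using br by (auto simp: count_eq_zero_iff)
    have c1: "x \<notin> set r' \<Longrightarrow> count (mset r') x = 0" for x by (simp add: count_eq_zero_iff)
    show ?thesis using ab br c0[of m] c1[of m] \<open>s = a # r\<close> Cons
      by (cases "a = b"; cases "a = m"; cases "b = m") (auto simp: not_le c1)
  qed
qed

lemma dim_Node_le:
  "dim (Node y ts) \<le> m \<longleftrightarrow> (\<forall>t\<in>set ts. dim t \<le> m) \<and>
     (\<forall>i<length ts. \<forall>j<length ts. i \<noteq> j \<longrightarrow> dim (ts!i) = m \<longrightarrow> dim (ts!j) \<noteq> m)"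
proof -
  define s where "s = rev (sort (map dim ts))"
  have srt: "sorted_wrt (\<ge>) s" unfolding s_def
    by (simp add: sorted_wrt_rev)
  have ms: "mset s = mset (map dim ts)" and st: "set s = dim ` set ts" unfolding s_def by auto
  have "dim (Node y ts) = (if s = [] then 0 else if length s = 1 then s!0 else if s!0 = s!1 then s!0+1 else s!0)"
    unfolding s_def by (simp add: Let_def)
  also have "\<dots> \<le> m \<longleftrightarrow> (\<forall>x\<in>set s. x \<le> m) \<and> count (mset s) (m::nat) \<le> 1" by (rule F_le[OF srt])
  finally show ?thesis unfolding ms st count_le1_iff by auto
qed

declare dim.simps(2)[simp del]

definition Tk :: "('x \<Rightarrow> ('s, 'x) poly) \<Rightarrow> nat \<Rightarrow> 'x \<Rightarrow> ('s, 'x) dtree set" where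
  "Tk f k x = {t \<in> dtrees f x. dim t \<le> k}"

inductive gr :: "('x \<Rightarrow> ('s,'x) dtree set) \<Rightarrow> ('s,'x) dtree \<Rightarrow> ('s,'x) dtree \<Rightarrow> bool" for Tn where
  gr_cst: "gr Tn (Leaf (Cst a)) (Leaf (Cst a))"
| gr_var: "t' \<in> Tn y \<Longrightarrow> gr Tn (Leaf (Vr y)) t'"
| gr_node: "list_all2 (gr Tn) ts ts' \<Longrightarrow> gr Tn (Node y ts) (Node y ts')"

lemma gr_props:
  assumes "gr Tn t t'" "\<And>y s. s \<in> Tn y \<Longrightarrow> wf_tree f s \<and> label s = Vr y \<and> dim s \<le> k"
    "wf_tree f t"
  shows "wf_tree f t' \<and> label t' = label t \<and> dim t' \<le> dim t + k"
  using assms(1,3)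
proof (induction rule: gr.induct)
  case (gr_cst a) then show ?case by simp
next
  case (gr_var t' y) then show ?case using assms(2) by auto
next
  case (gr_node ts ts' y)
  have len: "length ts' = length ts" using gr_node(1) by (simp add: list_all2_lengthD)
  have IH: "\<And>i. i < length ts \<Longrightarrow> wf_tree f (ts'!i) \<and> label (ts'!i) = label (ts!i) \<and> dim (ts'!i) \<le> dim (ts!i) + k"
    using gr_node by (auto simp: list_all2_conv_all_nth)
  have wf: "wf_tree f (ts'!i)" if "i < length ts" for i using IH that by blast
  have lab: "map label ts' = map label ts" using IH len by (simp add: list_eq_iff_nth_eq)
  have "dim (Node y ts) \<le> dim (Node y ts)" by simp
  then have D: "(\<forall>t\<in>set ts. dim t \<le> dim (Node y ts)) \<and>
     (\<forall>i<length ts. \<forall>j<length ts. i \<noteq> j \<longrightarrow> dim (ts!i) = dim (Node y ts) \<longrightarrow> dim (ts!j) \<noteq> dim (Node y ts))"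
    by (subst (asm) dim_Node_le) 
  have "dim (Node y ts') \<le> dim (Node y ts) + k"
    unfolding dim_Node_le
  proof (intro conjI ballI allI impI)
    fix t assume "t \<in> set ts'"
    then obtain i where "i < length ts" "t = ts'!i" using len by (auto simp: in_set_conv_nth)
    moreover have "dim (ts'!i) \<le> dim (ts!i) + k" using IH \<open>i < length ts\<close> by blast
    moreover have "dim (ts!i) \<le> dim (Node y ts)" using D \<open>i < length ts\<close> nth_mem by blast
    ultimately show "dim t \<le> dim (Node y ts) + k" by simp
  next
    fix i j assume ij: "i < length ts'" "j < length ts'" "i \<noteq> j" "dim (ts'!i) = dim (Node y ts) + k"
    show "dim (ts'!j) \<noteq> dim (Node y ts) + k"
    proof
      assume jm: "dim (ts'!j) = dim (Node y ts) + k"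
      have i1: "dim (ts'!i) \<le> dim (ts!i) + k" using IH[of i] ij(1) len by simp
      have j1: "dim (ts'!j) \<le> dim (ts!j) + k" using IH[of j] ij(2) len by simp
      have i2: "dim (ts!i) \<le> dim (Node y ts)" using D ij(1) len nth_mem by simp
      have j2: "dim (ts!j) \<le> dim (Node y ts)" using D ij(2) len nth_mem by simp
      have "dim (ts!j) = dim (Node y ts)" using j1 j2 jm by linarith
      moreover have "dim (ts!i) = dim (Node y ts)" using i1 i2 ij(4) by linarith
      moreover have "i < length ts" "j < length ts" using ij(1,2) len by simp_all
      ultimately show False using D ij(3) by blast
    qed
  qed
  then show ?case using gr_node lab wf len by (auto simp: in_set_conv_nth)
qed

fun cut :: "nat \<Rightarrow> ('s,'x) dtree \<Rightarrow> ('s,'x) dtree" where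
  "cut k (Leaf s) = Leaf s"
| "cut k (Node y ts) = (if dim (Node y ts) \<le> k then Leaf (Vr y) else Node y (map (cut k) ts))"

lemma label_cut[simp]: "label (cut k t) = label t"
  by (cases t) auto

lemma wf_cut: "wf_tree f t \<Longrightarrow> wf_tree f (cut k t)"
  by (induction t) (auto simp: comp_def)

lemma dim_cut: "dim (cut k t) \<le> dim t - k"
proof (induction t)
  case (Leaf s) then show ?case by simp
next
  case (Node y ts)
  show ?case
  proof (cases "dim (Node y ts) \<le> k")
    case True then show ?thesis by simp
  next
    case False
    let ?m = "dim (Node y ts) - k"
    have "dim (Node y ts) \<le> dim (Node y ts)" by simp
    then have D: "(\<forall>t\<in>set ts. dim t \<le> dim (Node y ts)) \<and>
     (\<forall>i<length ts. \<forall>j<length ts. i \<noteq> j \<longrightarrow> dim (ts!i) = dim (Node y ts) \<longrightarrow> dim (ts!j) \<noteq> dim (Node y ts))"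
      by (subst (asm) dim_Node_le)
    have c: "dim (cut k (ts!i)) \<le> dim (ts!i) - k" if "i < length ts" for i using Node.IH that by auto
    have "dim (Node y (map (cut k) ts)) \<le> ?m"
      unfolding dim_Node_le
    proof (intro conjI ballI allI impI)
      fix t assume "t \<in> set (map (cut k) ts)"
      then obtain i where "i < length ts" "t = cut k (ts!i)" by (auto simp: in_set_conv_nth)
      moreover have "dim (ts!i) \<le> dim (Node y ts)" using D \<open>i < length ts\<close> nth_mem by blast
      ultimately show "dim t \<le> ?m" using c[of i] by simp
    next
      fix i j assume ij: "i < length (map (cut k) ts)" "j < length (map (cut k) ts)" "i \<noteq> j"
        "dim (map (cut k) ts ! i) = ?m"
      show "dim (map (cut k) ts ! j) \<noteq> ?m"
      proof
        assume jm: "dim (map (cut k) ts ! j) = ?m"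
        have f2: "dim (ts!i) \<le> dim (Node y ts)" "dim (ts!j) \<le> dim (Node y ts)"
          using D ij nth_mem by auto
        have f4: "dim (cut k (ts!i)) \<le> dim (ts!i) - k" "dim (cut k (ts!j)) \<le> dim (ts!j) - k"
          using c ij(1,2) by simp_all
        have ci: "dim (cut k (ts!i)) = dim (Node y ts) - k" using ij(1,4) by simp
        have cj: "dim (cut k (ts!j)) = dim (Node y ts) - k" using ij(2) jm by simp
        have dj: "dim (ts!j) = dim (Node y ts)" using cj f2(2) f4(2) False by linarith
        have di: "dim (ts!i) = dim (Node y ts)" using ci f2(1) f4(1) False by linarith
        have "i < length ts" "j < length ts" using ij(1,2) by simp_all
        then show False using D ij(3) di dj by blast
      qed
    qed
    then show ?thesis using False by simp
  qed
qed

lemma cut_gr: "wf_tree f t \<Longrightarrow> gr (Tk f k) (cut k t) t"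
proof (induction t)
  case (Leaf s) then show ?case
    by (cases s) (auto intro: gr.intros simp: Tk_def dtrees_def)
next
  case (Node y ts)
  show ?case
  proof (cases "dim (Node y ts) \<le> k")
    case True then show ?thesis using Node.prems by (auto intro!: gr_var simp: Tk_def dtrees_def)
  next
    case False
    have "list_all2 (gr (Tk f k)) (map (cut k) ts) ts"
      using Node by (auto simp: list_all2_conv_all_nth nth_mem)
    then show ?thesis using False by (auto intro: gr_node)
  qed
qed

lemma Tk_double:
  "{t'. \<exists>t\<in>Tk f k x. gr (Tk f k) t t'} = Tk f (2*k) x"
proof
  show "{t'. \<exists>t\<in>Tk f k x. gr (Tk f k) t t'} \<subseteq> Tk f (2*k) x"
  proof
    fix t' assume "t' \<in> {t'. \<exists>t\<in>Tk f k x. gr (Tk f k) t t'}"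
    then obtain t where t: "t \<in> Tk f k x" "gr (Tk f k) t t'" by auto
    have "wf_tree f t' \<and> label t' = label t \<and> dim t' \<le> dim t + k"
      by (rule gr_props[OF t(2)]) (use t(1) in \<open>auto simp: Tk_def dtrees_def\<close>)
    then show "t' \<in> Tk f (2*k) x" using t(1) by (auto simp: Tk_def dtrees_def)
  qed
next
  show "Tk f (2*k) x \<subseteq> {t'. \<exists>t\<in>Tk f k x. gr (Tk f k) t t'}"
  proof
    fix t assume t: "t \<in> Tk f (2*k) x"
    have "cut k t \<in> Tk f k x" using t dim_cut[of k t] wf_cut[of f t]
      by (auto simp: Tk_def dtrees_def)
    moreover have "gr (Tk f k) (cut k t) t" using t cut_gr by (auto simp: Tk_def dtrees_def)
    ultimately show "t \<in> {t'. \<exists>t\<in>Tk f k x. gr (Tk f k) t t'}" by auto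
  qed
qed



lemma concat_map_yield_Leaf[simp]: "concat (map yield (map Leaf u)) = u"
  by (induction u) auto

lemma yield_o_Leaf[simp]: "concat (map (yield \<circ> Leaf) u) = u"
  by (induction u) auto

lemma yield_Node_Leaf[simp]: "yield (Node x (map Leaf u)) = u"
  by (induction u) auto

lemma map_label_Leaf[simp]: "map label (map Leaf u) = u"
  by (induction u) auto

lemma label_o_Leaf[simp]: "label \<circ> Leaf = (\<lambda>x. x)"
  by auto

lemma dim_Node_leaves: "dim (Node x (map Leaf u)) \<le> 1"
  unfolding dim_Node_le by auto

lemma dim_Node_one:
  assumes "dim t' \<le> 1"
  shows "dim (Node x (map Leaf u @ t' # map Leaf v)) \<le> 1"
  unfolding dim_Node_le
proof (intro conjI ballI allI impI)
  fix t assume "t \<in> set (map Leaf u @ t' # map Leaf v)" then show "dim t \<le> 1" using assms by auto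
next
  fix i j assume ij: "i < length (map Leaf u @ t' # map Leaf v)" "j < length (map Leaf u @ t' # map Leaf v)"
    "i \<noteq> j" "dim ((map Leaf u @ t' # map Leaf v) ! i) = 1"
  have "k \<noteq> length u \<Longrightarrow> k < length (map Leaf u @ t' # map Leaf v) \<Longrightarrow> dim ((map Leaf u @ t' # map Leaf v) ! k) = 0" for k
    by (cases "k < length u") (auto simp: nth_append nth_Cons' split: if_splits)
  note z = this
  show "dim ((map Leaf u @ t' # map Leaf v) ! j) \<noteq> 1"
  proof (cases "j = length u")
    case True
    then have "i \<noteq> length u" using ij by simp
    then have "dim ((map Leaf u @ t' # map Leaf v) ! i) = 0" using z ij by blast
    then show ?thesis using ij by simp
  next
    case False
    then show ?thesis using z ij by simp
  qed
qed

lemma lin_sub_finite: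
  assumes "\<And>x. finite (f x)"
  shows "lin_sub f x g \<Longrightarrow> finite g"
proof (induction rule: lin_sub.induct)
  case (lin_id x) then show ?case by simp
next
  case (lin_step y g' g x)
  then obtain m u v where "g = (f x - {m}) \<union> {u @ m' @ v | m'. m' \<in> g'}"
    by (auto simp: subst1_def)
  then show ?case using lin_step assms by simp
qed

lemma lin_sub_trees:
  "lin_sub f x g \<Longrightarrow> \<forall>m\<in>g. \<exists>t\<in>Tk f 1 x. yield t = m"
proof (induction rule: lin_sub.induct)
  case (lin_id x)
  have "Leaf (Vr x) \<in> Tk f 1 x" by (simp add: Tk_def dtrees_def)
  then show ?case by force
next
  case (lin_step y g' g x)
  then obtain m u v where g: "g = (f x - {m}) \<union> {u @ m' @ v | m'. m' \<in> g'}" and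
    m: "m \<in> f x" "m = u @ Vr y # v"
    by (auto simp: subst1_def)
  show ?case
  proof
    fix m0 assume "m0 \<in> g"
    then consider "m0 \<in> f x" | m' where "m' \<in> g'" "m0 = u @ m' @ v" using g by auto
    then show "\<exists>t\<in>Tk f 1 x. yield t = m0"
    proof cases
      case 1
      then have "Node x (map Leaf m0) \<in> Tk f 1 x" using dim_Node_leaves
        by (auto simp: Tk_def dtrees_def)
      then show ?thesis by force
    next
      case 2
      then obtain t' where t': "t' \<in> Tk f 1 y" "yield t' = m'" using lin_step.IH by blast
      let ?t = "Node x (map Leaf u @ t' # map Leaf v)"
      have "map label (map Leaf u @ t' # map Leaf v) = m" using m t' by (simp add: Tk_def dtrees_def)
      then have "?t \<in> Tk f 1 x" using m t' dim_Node_one[of t' x u v]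
        by (auto simp: Tk_def dtrees_def)
      moreover have "yield ?t = m0" using 2 t' by simp
      ultimately show ?thesis by blast
    qed
  qed
qed

lemma monomial_len:
  assumes "is_monomial m" "Vr y \<in> set m" shows "length m \<ge> 2"
  using assms by (cases m rule: is_monomial.cases) auto

lemma dim0_len: "dim (Node y ts) = 0 \<Longrightarrow> length ts \<le> 1"
proof -
  assume "dim (Node y ts) = 0"
  then have "dim (Node y ts) \<le> 0" by simp
  then have D: "(\<forall>t\<in>set ts. dim t \<le> 0) \<and>
     (\<forall>i<length ts. \<forall>j<length ts. i \<noteq> j \<longrightarrow> dim (ts!i) = 0 \<longrightarrow> dim (ts!j) \<noteq> 0)"
    by (subst (asm) dim_Node_le)
  show "length ts \<le> 1"
  proof (rule ccontr)
    assume "\<not> length ts \<le> 1"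
    then have "0 < length ts" "1 < length ts" by auto
    then show False using D nth_mem by (metis le_zero_eq zero_neq_one)
  qed
qed

lemma leaves_map: "(\<forall>t\<in>set xs. \<exists>s. t = Leaf s) \<Longrightarrow> xs = map Leaf (map label xs)"
  by (induction xs) auto

lemma trees_lin_sub:
  assumes mono: "\<And>x m. m \<in> f x \<Longrightarrow> is_monomial m"
    and var: "\<And>x m. m \<in> f x \<Longrightarrow> \<exists>y. Vr y \<in> set m"
  shows "wf_tree f t \<Longrightarrow> dim t \<le> 1 \<Longrightarrow> label t = Vr x \<Longrightarrow> \<exists>g. lin_sub f x g \<and> yield t \<in> g"
proof (induction t arbitrary: x)
  case (Leaf s)
  then show ?case by (auto intro: lin_id)
next
  case (Node z ts)
  then have zx: "z = x" by simp
  define m where "m = map label ts"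
  have mf: "m \<in> f x" using Node.prems zx m_def by simp
  have D: "(\<forall>t\<in>set ts. dim t \<le> 1) \<and>
     (\<forall>i<length ts. \<forall>j<length ts. i \<noteq> j \<longrightarrow> dim (ts!i) = 1 \<longrightarrow> dim (ts!j) \<noteq> 1)"
    using Node.prems(2) by (subst (asm) dim_Node_le)
  have nl: "dim t = 1" if tin: "t \<in> set ts" and nlf: "\<nexists>s. t = Leaf s" for t
  proof -
    obtain y ts'' where t: "t = Node y ts''" using nlf by (metis dtree.exhaust)
    have "wf_tree f t" using Node.prems(1) tin by simp
    then have "map label ts'' \<in> f y" using t by simp
    then have "length ts'' \<ge> 2" using mono var monomial_len by (metis length_map)
    then have "dim t \<noteq> 0" using dim0_len t by fastforce
    then show ?thesis using D tin by fastforce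
  qed
  show ?case
  proof (cases "\<forall>t\<in>set ts. \<exists>s. t = Leaf s")
    case True
    then have ts: "ts = map Leaf m" unfolding m_def by (rule leaves_map)
    obtain y where "Vr y \<in> set m" using var mf by blast
    then obtain u v where uv: "m = u @ Vr y # v" by (meson split_list)
    have "(f x - {m}) \<union> {u @ m' @ v | m'. m' \<in> {[Vr y]}} \<in> subst1 (f x) y {[Vr y]}"
      unfolding subst1_def using mf uv by blast
    then have "lin_sub f x ((f x - {m}) \<union> {u @ m' @ v | m'. m' \<in> {[Vr y]}})"
      by (rule lin_step[OF lin_id])
    moreover have "yield (Node z ts) = m" using ts by simp
    moreover have "m \<in> (f x - {m}) \<union> {u @ m' @ v | m'. m' \<in> {[Vr y]}}" using uv by simp
    ultimately show ?thesis by blast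
  next
    case False
    then obtain i where i: "i < length ts" "\<nexists>s. ts!i = Leaf s" by (metis in_set_conv_nth)
    have others: "\<exists>s. ts!j = Leaf s" if "j < length ts" "j \<noteq> i" for j
    proof (rule ccontr)
      assume "\<nexists>s. ts!j = Leaf s"
      then have "dim (ts!j) = 1" "dim (ts!i) = 1" using nl i that nth_mem by blast+
      then show False using D i that by blast
    qed
    obtain y ts'' where ti: "ts!i = Node y ts''" using i(2) by (metis dtree.exhaust)
    define u where "u = map label (take i ts)"
    define v where "v = map label (drop (Suc i) ts)"
    have tsplit: "ts = take i ts @ ts!i # drop (Suc i) ts" using i by (simp add: id_take_nth_drop)
    have tk: "take i ts = map Leaf u" unfolding u_def
      by (rule leaves_map) (use others i in \<open>auto simp: in_set_conv_nth\<close>)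
    have dr: "drop (Suc i) ts = map Leaf v" unfolding v_def
      by (rule leaves_map) (use others i in \<open>auto simp: in_set_conv_nth\<close>)
    have ts: "ts = map Leaf u @ ts!i # map Leaf v" using tsplit tk dr by simp
    have mu: "m = u @ Vr y # v" unfolding m_def using ts ti
      by (metis label.simps(2) list.simps(9) map_append map_label_Leaf)
    have "ts!i \<in> set ts" using i by simp
    moreover have "wf_tree f (ts!i)" using Node.prems(1) \<open>ts!i \<in> set ts\<close> by simp
    moreover have "dim (ts!i) \<le> 1" using D \<open>ts!i \<in> set ts\<close> by blast
    moreover have "label (ts!i) = Vr y" using ti by simp
    ultimately obtain g' where g': "lin_sub f y g'" "yield (ts!i) \<in> g'"
      using Node.IH[of "ts!i" y] by blast
    let ?g = "(f x - {m}) \<union> {u @ m' @ v | m'. m' \<in> g'}"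
    have "?g \<in> subst1 (f x) y g'" unfolding subst1_def using mf mu by blast
    then have "lin_sub f x ?g" by (rule lin_step[OF g'(1)])
    moreover have "yield (Node z ts) = u @ yield (ts!i) @ v" by (subst ts) simp
    ultimately show ?thesis using g'(2) by blast
  qed
qed



instance sym :: (countable,countable) countable by countable_datatype
instance dtree :: (countable,countable) countable by countable_datatype

definition consts_of :: "('x \<Rightarrow> ('s, 'x) poly) \<Rightarrow> 's set" where
  "consts_of f = {a. \<exists>x m. m \<in> f x \<and> Cst a \<in> set m}"

lemma finite_consts_of:
  fixes f :: "'x::finite \<Rightarrow> ('s, 'x) poly"
  assumes "\<And>x. finite (f x)"
  shows "finite (consts_of f)"
proof -
  have "consts_of f = (\<Union>x. \<Union>m\<in>f x. Cst -` set m)" unfolding consts_of_def by auto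
  moreover have "finite (Cst -` set m)" for m :: "('s,'x) mono"
    by (rule finite_vimageI) (auto simp: inj_def)
  ultimately show ?thesis using assms by simp
qed

lemma wf_set1:
  "wf_tree f t \<Longrightarrow> set1_dtree t \<subseteq> consts_of f \<union> set1_sym (label t)"
proof (induction t)
  case (Leaf s) then show ?case by simp
next
  case (Node y ts)
  show ?case
  proof
    fix a assume "a \<in> set1_dtree (Node y ts)"
    then obtain t where t: "t \<in> set ts" "a \<in> set1_dtree t" by auto
    then have "a \<in> consts_of f \<union> set1_sym (label t)" using Node by auto
    moreover have "label t \<in> set (map label ts)" using t by simp
    moreover have "map label ts \<in> f y" using Node.prems by simp
    moreover have "a \<in> consts_of f" if "label t = Cst a"
      using that \<open>label t \<in> set (map label ts)\<close> \<open>map label ts \<in> f y\<close>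
      unfolding consts_of_def by (metis (mono_tags, lifting) mem_Collect_eq)
    ultimately show "a \<in> consts_of f \<union> set1_sym (label (Node y ts))"
      by (cases "label t") auto
  qed
qed

lemma countable_trees_consts:
  assumes "finite K"
  shows "countable {t :: ('s, 'x::countable) dtree. set1_dtree t \<subseteq> K}"
proof -
  let ?h = "map_dtree (to_nat_on K) id :: ('s, 'x) dtree \<Rightarrow> (nat, 'x) dtree"
  have "inj_on ?h {t. set1_dtree t \<subseteq> K}"
  proof (rule inj_on_inverseI)
    fix t :: "('s,'x) dtree" assume "t \<in> {t. set1_dtree t \<subseteq> K}"
    then have "map_dtree (from_nat_into K \<circ> to_nat_on K) (id \<circ> id) t = map_dtree id id t"
      using countable_finite[OF assms] by (intro dtree.map_cong0) (auto simp: from_nat_into_to_nat_on)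
    then show "map_dtree (from_nat_into K) id (?h t) = t"
      by (simp add: dtree.map_comp dtree.map_id)
  qed
  then show ?thesis by (rule countable_image_inj_on[rotated]) simp
qed

lemma countable_dtrees:
  assumes "\<And>x. finite (f (x::'x::finite))"
  shows "countable (dtrees f x)"
proof (rule countable_subset[OF _ countable_trees_consts[OF finite_consts_of[OF assms]]])
  show "dtrees f x \<subseteq> {t. set1_dtree t \<subseteq> consts_of f}"
    using wf_set1 by (fastforce simp: dtrees_def)
qed

lemma lin_sub_syms:
  "lin_sub f x g \<Longrightarrow> \<forall>m\<in>g. set m \<subseteq> Cst ` consts_of f \<union> range Vr"
proof (induction rule: lin_sub.induct)
  case (lin_id x) then show ?case by auto
next
  case (lin_step y g' g x)
  then obtain m u v where g: "g = (f x - {m}) \<union> {u @ m' @ v | m'. m' \<in> g'}" and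
    m: "m \<in> f x" "m = u @ Vr y # v"
    by (auto simp: subst1_def)
  have fx: "set m0 \<subseteq> Cst ` consts_of f \<union> range Vr" if "m0 \<in> f x" for m0
  proof
    fix s assume s: "s \<in> set m0"
    show "s \<in> Cst ` consts_of f \<union> range Vr"
    proof (cases s)
      case (Cst a)
      with s that have "a \<in> consts_of f" unfolding consts_of_def by blast
      then show ?thesis using Cst by blast
    next
      case (Vr z) then show ?thesis by blast
    qed
  qed
  show ?case
  proof
    fix m0 assume "m0 \<in> g"
    then consider "m0 \<in> f x" | m' where "m' \<in> g'" "m0 = u @ m' @ v" using g by auto
    then show "set m0 \<subseteq> Cst ` consts_of f \<union> range Vr"
    proof cases
      case 1 then show ?thesis by (rule fx)
    next
      case 2
      have "set u \<subseteq> Cst ` consts_of f \<union> range Vr" "set v \<subseteq> Cst ` consts_of f \<union> range Vr"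
        using fx[OF m(1)] m(2) by auto
      moreover have "set m' \<subseteq> Cst ` consts_of f \<union> range Vr" using lin_step.IH 2 by blast
      ultimately show ?thesis using 2 by simp
    qed
  qed
qed

lemma countable_lin_sub:
  fixes f :: "'x::finite \<Rightarrow> ('s, 'x) poly"
  assumes "\<And>x. finite (f x)"
  shows "countable {g. lin_sub f x g}"
proof (rule countable_subset)
  show "{g. lin_sub f x g} \<subseteq> {A. finite A \<and> A \<subseteq> lists (Cst ` consts_of f \<union> range Vr)}"
    using lin_sub_finite[OF assms] lin_sub_syms by fastforce
  show "countable {A. finite A \<and> A \<subseteq> lists (Cst ` consts_of f \<union> range (Vr :: 'x \<Rightarrow> ('s,'x) sym))}"
  proof -
    have c1: "countable (Cst ` consts_of f)"
      by (intro countable_finite finite_imageI finite_consts_of assms)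
    have "finite (UNIV :: 'x set)" by simp
    then have c2: "countable (range (Vr :: 'x \<Rightarrow> ('s,'x) sym))"
      by (intro countable_finite finite_imageI)
    show ?thesis using countable_Collect_finite_subset[OF countable_lists[OF countable_Un[OF c1 c2]]] by simp
  qed
qed



definition Sp :: "'a::plus set \<Rightarrow> 'a" where
  "Sp A = (THE u. is_sup A u)"

lemma natord_trans: "natord (a::'a::semigroup_add) b \<Longrightarrow> natord b c \<Longrightarrow> natord a c"
  unfolding natord_def by (metis add.assoc)

context
  fixes dummy :: "'s::{semiring_0,monoid_mult} itself"
  assumes oc: "omega_continuous TYPE('s)" and idem: "idempotent_semiring TYPE('s)"
begin

lemma oc_chain: "\<forall>s :: nat \<Rightarrow> 's. (\<forall>i. natord (s i) (s (Suc i))) \<longrightarrow> (\<exists>u. is_sup (range s) u)"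
  using oc unfolding omega_continuous_def by (elim conjE)

lemma oc_left: "(c::'s) * csum a = csum (\<lambda>i. c * a i)"
  using oc unfolding omega_continuous_def by (elim conjE) simp

lemma oc_right: "csum a * (c::'s) = csum (\<lambda>i. a i * c)"
  using oc unfolding omega_continuous_def by (elim conjE) simp

lemma idem': "(a::'s) + a = a"
  using idem by (simp add: idempotent_semiring_def)

lemma natord_iff: "natord (a::'s) b \<longleftrightarrow> a + b = b"
proof
  assume "natord a b"
  then obtain c where "a + c = b" by (auto simp: natord_def)
  then show "a + b = b" by (metis add.assoc idem')
qed (auto simp: natord_def)

lemma natord_antisym: "natord (a::'s) b \<Longrightarrow> natord b a \<Longrightarrow> a = b"
  by (simp add: natord_iff add.commute)

lemma sup_unique: "is_sup A (u::'s) \<Longrightarrow> is_sup A v \<Longrightarrow> u = v"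
proof -
  assume u: "is_sup A u" and v: "is_sup A v"
  have "natord u v" using u v unfolding is_sup_def by blast
  moreover have "natord v u" using u v unfolding is_sup_def by blast
  ultimately show "u = v" by (rule natord_antisym)
qed

lemma Sp_eq: "is_sup A (u::'s) \<Longrightarrow> Sp A = u"
  unfolding Sp_def by (rule the_equality) (auto intro: sup_unique)

lemma natord_add: "natord (a::'s) v \<Longrightarrow> natord b v \<Longrightarrow> natord (a + b) v"
  by (simp add: natord_iff add.assoc)

lemma natord_add1: "natord (a::'s) (a + b)"
  by (auto simp: natord_def)

lemma natord_add2: "natord (b::'s) (a + b)"
  by (metis add.commute natord_add1)

lemma fin_sup: "finite I \<Longrightarrow> is_sup (g ` I) (sum g I :: 's)"
proof (induction rule: finite_induct)
  case empty then show ?case by (simp add: is_sup_def natord_def)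
next
  case (insert i F)
  have s: "sum g (insert i F) = g i + sum g F" using insert by simp
  show ?case unfolding s is_sup_def
  proof (intro conjI ballI allI impI)
    fix a assume "a \<in> g ` insert i F"
    then consider "a = g i" | "a \<in> g ` F" by auto
    then show "natord a (g i + sum g F)"
    proof cases
      case 1 then show ?thesis by (simp add: natord_add1)
    next
      case 2 then have "natord a (sum g F)" using insert.IH by (auto simp: is_sup_def)
      then show ?thesis using natord_trans natord_add2 by blast
    qed
  next
    fix v assume v: "\<forall>a\<in>g ` insert i F. natord a v"
    then have "natord (sum g F) v" using insert.IH by (auto simp: is_sup_def)
    moreover have "natord (g i) v" using v by auto
    ultimately show "natord (g i + sum g F) v" by (rule natord_add[rotated])
  qed
qed

lemma csum_sup: "is_sup (range e) (csum e :: 's)"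
proof -
  define p where "p n = (\<Sum>i\<le>n. e i)" for n
  have "\<forall>n. natord (p n) (p (Suc n))" unfolding p_def by (simp add: natord_add1)
  then obtain u where u: "is_sup (range p) u" using oc_chain by blast
  have cs: "csum e = u" unfolding csum_def p_def[symmetric]
    using u by (rule the_equality) (simp add: sup_unique[OF _ u])
  have ps: "is_sup (e ` {..n}) (p n)" for n unfolding p_def by (rule fin_sup) simp
  show ?thesis unfolding cs is_sup_def
  proof (intro conjI ballI allI impI)
    fix a assume "a \<in> range e"
    then obtain n where "a = e n" by auto
    then have "natord a (p n)" using ps[of n] by (auto simp: is_sup_def)
    moreover have "natord (p n) u" using u by (auto simp: is_sup_def)
    ultimately show "natord a u" by (rule natord_trans)
  next
    fix v assume v: "\<forall>a\<in>range e. natord a v"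
    have "natord (p n) v" for n using ps[of n] v by (auto simp: is_sup_def)
    then show "natord u v" using u by (auto simp: is_sup_def)
  qed
qed

lemma ssum_sup: "countable I \<Longrightarrow> is_sup (g ` I) (ssum g I :: 's)"
proof (cases "finite I")
  case True then show ?thesis by (simp add: ssum_def fin_sup)
next
  case False
  assume I: "countable I"
  then have r: "range (from_nat_into I) = I" using False by (intro range_from_nat_into) auto
  have "is_sup (range (\<lambda>n. g (from_nat_into I n))) (ssum g I)"
    using False csum_sup by (simp add: ssum_def)
  moreover have "range (\<lambda>n. g (from_nat_into I n)) = g ` I" using r by (metis image_image)
  ultimately show ?thesis by simp
qed

lemma Sp_ex: "countable (A::'s set) \<Longrightarrow> is_sup A (Sp A)"
  using ssum_sup[of A id] Sp_eq by simp

lemma ssum_Sp: "countable I \<Longrightarrow> ssum g I = (Sp (g ` I) :: 's)"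
  using ssum_sup[of I g] Sp_eq by metis

lemma Sp_single: "Sp {a::'s} = a"
  by (rule Sp_eq) (simp add: is_sup_def natord_iff idem')

lemma Sp_mult_left: "countable (A::'s set) \<Longrightarrow> c * Sp A = Sp ((*) c ` A)"
proof -
  assume A: "countable A"
  have "Sp A = ssum id A" using ssum_Sp[OF A, of id] by simp
  moreover have "c * ssum id A = ssum ((*) c) A"
  proof (cases "finite A")
    case True then show ?thesis by (simp add: ssum_def sum_distrib_left)
  next
    case False
    have "c * csum (\<lambda>n. id (from_nat_into A n)) = csum (\<lambda>n. c * id (from_nat_into A n))"
      by (rule oc_left)
    then show ?thesis using False by (simp add: ssum_def)
  qed
  ultimately show ?thesis using ssum_Sp[OF A] by simp
qed

lemma Sp_mult_right: "countable (A::'s set) \<Longrightarrow> Sp A * c = Sp ((\<lambda>a. a * c) ` A)"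
proof -
  assume A: "countable A"
  have "Sp A = ssum id A" using ssum_Sp[OF A, of id] by simp
  moreover have "ssum id A * c = ssum (\<lambda>a. a * c) A"
  proof (cases "finite A")
    case True then show ?thesis by (simp add: ssum_def sum_distrib_right)
  next
    case False
    have "csum (\<lambda>n. id (from_nat_into A n)) * c = csum (\<lambda>n. id (from_nat_into A n) * c)"
      by (rule oc_right)
    then show ?thesis using False by (simp add: ssum_def)
  qed
  ultimately show ?thesis using ssum_Sp[OF A] by simp
qed

lemma Sp_UN:
  assumes I: "countable I" and B: "\<And>i. i \<in> I \<Longrightarrow> countable (B i :: 's set)"
  shows "Sp (\<Union>i\<in>I. B i) = Sp ((\<lambda>i. Sp (B i)) ` I)"
proof (rule Sp_eq)
  let ?u = "Sp ((\<lambda>i. Sp (B i)) ` I)"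
  have u: "is_sup ((\<lambda>i. Sp (B i)) ` I) ?u" using I by (intro Sp_ex) simp
  have b: "is_sup (B i) (Sp (B i))" if "i \<in> I" for i using B[OF that] by (rule Sp_ex)
  show "is_sup (\<Union>i\<in>I. B i) ?u" unfolding is_sup_def
  proof (intro conjI ballI allI impI)
    fix a assume "a \<in> (\<Union>i\<in>I. B i)"
    then obtain i where i: "i \<in> I" "a \<in> B i" by auto
    then have "natord a (Sp (B i))" using b by (auto simp: is_sup_def)
    moreover have "natord (Sp (B i)) ?u" using u i by (auto simp: is_sup_def)
    ultimately show "natord a ?u" by (rule natord_trans)
  next
    fix v assume v: "\<forall>a\<in>(\<Union>i\<in>I. B i). natord a v"
    have "natord (Sp (B i)) v" if "i \<in> I" for i using b[OF that] v that by (auto simp: is_sup_def)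
    then show "natord ?u v" using u by (auto simp: is_sup_def)
  qed
qed

lemma Sp_prod:
  assumes X: "countable (X::'s set)" and Y: "countable Y"
  shows "Sp X * Sp Y = Sp ((\<lambda>(x,y). x * y) ` (X \<times> Y))"
proof -
  have "Sp X * Sp Y = Sp ((\<lambda>x. x * Sp Y) ` X)" by (rule Sp_mult_right[OF X])
  also have "(\<lambda>x. x * Sp Y) ` X = (\<lambda>x. Sp ((*) x ` Y)) ` X"
    using Sp_mult_left[OF Y] by simp
  also have "Sp \<dots> = Sp (\<Union>x\<in>X. (*) x ` Y)"
    by (rule Sp_UN[symmetric]) (use X Y in auto)
  also have "(\<Union>x\<in>X. (*) x ` Y) = (\<lambda>(x,y). x * y) ` (X \<times> Y)" by auto
  finally show ?thesis .
qed

end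



lemma wval_Nil[simp]: "wval [] c = 1" by (simp add: wval_def)
lemma wval_Cons[simp]: "wval (s#w) c = symval s c * wval w c" by (simp add: wval_def)
lemma wval_append: "wval (xs @ ys) c = wval xs c * wval ys c"
  by (induction xs) (simp_all add: mult.assoc)

lemma gr_Leaf_Cst: "gr Tn (Leaf (Cst a)) t' \<longleftrightarrow> t' = Leaf (Cst a)"
  by (auto elim: gr.cases intro: gr.intros)
lemma gr_Leaf_Vr: "gr Tn (Leaf (Vr y)) t' \<longleftrightarrow> t' \<in> Tn y"
  by (auto elim: gr.cases intro: gr.intros)
lemma gr_Node: "gr Tn (Node y ts) t' \<longleftrightarrow> (\<exists>ts'. t' = Node y ts' \<and> list_all2 (gr Tn) ts ts')"
  by (auto elim: gr.cases intro: gr.intros)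

lemma image_prod_split:
  "(\<lambda>(a,b). h (F a) (H b)) ` (P \<times> Q) = (\<lambda>(x,y). h x y) ` (F ` P \<times> H ` Q)"
  by force

context
  fixes dummy :: "'s::{semiring_0,monoid_mult} itself"
  assumes oc: "omega_continuous TYPE('s)" and idem: "idempotent_semiring TYPE('s)"
begin

lemma graft_list:
  fixes Tn :: "'x \<Rightarrow> ('s,'x) dtree set" and c c' :: "'x \<Rightarrow> 's"
  assumes "\<forall>t\<in>set ts. countable ((\<lambda>t'. wval (yield t') c) ` {t'. gr Tn t t'}) \<and>
     wval (yield t) c' = Sp ((\<lambda>t'. wval (yield t') c) ` {t'. gr Tn t t'})"
  shows "countable ((\<lambda>ts'. wval (concat (map yield ts')) c) ` {ts'. list_all2 (gr Tn) ts ts'}) \<and>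
     wval (concat (map yield ts)) c' = Sp ((\<lambda>ts'. wval (concat (map yield ts')) c) ` {ts'. list_all2 (gr Tn) ts ts'})"
  using assms
proof (induction ts)
  case Nil
  have "{ts'. list_all2 (gr Tn) [] ts'} = {[]}" by auto
  then show ?case using Sp_single[OF oc idem] by simp
next
  case (Cons t ts)
  let ?V = "(\<lambda>t'. wval (yield t') c) ` {t'. gr Tn t t'}"
  let ?L = "(\<lambda>ts'. wval (concat (map yield ts')) c) ` {ts'. list_all2 (gr Tn) ts ts'}"
  have IH: "countable ?L" "wval (concat (map yield ts)) c' = Sp ?L" using Cons by auto
  have hd: "countable ?V" "wval (yield t) c' = Sp ?V" using Cons.prems by auto
  have "{ts'. list_all2 (gr Tn) (t#ts) ts'} = (\<lambda>(a,b). a#b) ` ({t'. gr Tn t t'} \<times> {ts'. list_all2 (gr Tn) ts ts'})"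
    by (auto simp: list_all2_Cons1)
  then have "(\<lambda>ts'. wval (concat (map yield ts')) c) ` {ts'. list_all2 (gr Tn) (t#ts) ts'}
      = (\<lambda>(a,b). wval (yield a) c * wval (concat (map yield b)) c) ` ({t'. gr Tn t t'} \<times> {ts'. list_all2 (gr Tn) ts ts'})"
    by (simp add: image_image wval_append case_prod_beta)
  also have "\<dots> = (\<lambda>(x,y). x * y) ` (?V \<times> ?L)"
    by (rule image_prod_split[of "(*)"])
  finally have eq: "(\<lambda>ts'. wval (concat (map yield ts')) c) ` {ts'. list_all2 (gr Tn) (t#ts) ts'} = (\<lambda>(x,y). x * y) ` (?V \<times> ?L)" .
  show ?case
  proof
    show "countable ((\<lambda>ts'. wval (concat (map yield ts')) c) ` {ts'. list_all2 (gr Tn) (t#ts) ts'})"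
    proof -
      have "countable (?V \<times> ?L)" using hd(1) IH(1) by (simp add: countable_SIGMA)
      then show ?thesis unfolding eq by (rule countable_image)
    qed
    have "wval (concat (map yield (t#ts))) c' = wval (yield t) c' * wval (concat (map yield ts)) c'"
      by (simp add: wval_append)
    also have "\<dots> = Sp ?V * Sp ?L" using hd IH by simp
    also have "\<dots> = Sp ((\<lambda>(x,y). x * y) ` (?V \<times> ?L))" by (rule Sp_prod[OF oc idem hd(1) IH(1)])
    finally show "wval (concat (map yield (t#ts))) c' = Sp ((\<lambda>ts'. wval (concat (map yield ts')) c) ` {ts'. list_all2 (gr Tn) (t#ts) ts'})"
      unfolding eq .
  qed
qed

lemma graft_val:
  fixes Tn :: "'x \<Rightarrow> ('s,'x) dtree set" and c :: "'x \<Rightarrow> 's"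
  assumes cT: "\<And>y. countable (Tn y)"
  shows "countable ((\<lambda>t'. wval (yield t') c) ` {t'. gr Tn t t'}) \<and>
     wval (yield t) (\<lambda>y. Sp ((\<lambda>s. wval (yield s) c) ` Tn y)) = Sp ((\<lambda>t'. wval (yield t') c) ` {t'. gr Tn t t'})"
proof (induction t)
  case (Leaf s)
  show ?case
  proof (cases s)
    case (Cst a)
    have "{t'. gr Tn (Leaf (Cst a)) t'} = {Leaf (Cst a)}" by (auto simp: gr_Leaf_Cst)
    then show ?thesis using Cst Sp_single[OF oc idem] by simp
  next
    case (Vr y)
    have "{t'. gr Tn (Leaf (Vr y)) t'} = Tn y" by (auto simp: gr_Leaf_Vr)
    then show ?thesis using Vr cT by simp
  qed
next
  case (Node y ts)
  have s: "{t'. gr Tn (Node y ts) t'} = Node y ` {ts'. list_all2 (gr Tn) ts ts'}"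
    by (auto simp: gr_Node)
  have "(\<lambda>t'. wval (yield t') c) ` {t'. gr Tn (Node y ts) t'} =
     (\<lambda>ts'. wval (concat (map yield ts')) c) ` {ts'. list_all2 (gr Tn) ts ts'}"
    unfolding s by (simp add: image_image)
  then show ?case using graft_list[where ts=ts and Tn=Tn and c=c and c'="\<lambda>y. Sp ((\<lambda>s. wval (yield s) c) ` Tn y)"] Node.IH
    by simp
qed

end



theorem theorem6:
  fixes f :: "'x::finite \<Rightarrow> ('s::{semiring_0,monoid_mult}, 'x) poly"
  assumes "omega_continuous TYPE('s)" and "idempotent_semiring TYPE('s)"
    and "\<And>x. finite (f x)"
    and "\<And>x m. m \<in> f x \<Longrightarrow> is_monomial m"
    and "\<And>x m. m \<in> f x \<Longrightarrow> \<exists>y. Vr y \<in> set m"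
  shows "\<forall>n x. Mseq f n x = (\<lambda>c. ssum (\<lambda>t. wval (yield t) c) {t \<in> dtrees f x. dim t \<le> 2 ^ n})"
proof -
  note oc = assms(1) and idem = assms(2) and fin = assms(3) and mono = assms(4) and var = assms(5)
  have cT: "countable (Tk f k x)" for k x
    by (rule countable_subset[OF _ countable_dtrees[OF fin]]) (auto simp: Tk_def)
  have main: "\<forall>x c. Mseq f n x c = Sp ((\<lambda>t. wval (yield t) c) ` Tk f (2^n) x)" for n
  proof (induction n)
    case 0
    show ?case
    proof (intro allI)
      fix x and c :: "'x \<Rightarrow> 's"
      let ?L = "{g. lin_sub f x g}"
      let ?w = "\<lambda>m. wval m c"
      have cL: "countable ?L" by (rule countable_lin_sub[OF fin])
      have fg: "finite g" if "g \<in> ?L" for g using lin_sub_finite[of f x g] fin that by blast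
      have "Mseq f 0 x c = ssum (\<lambda>g. peval g c) ?L" by (simp add: lin_completion_def)
      also have "\<dots> = Sp ((\<lambda>g. peval g c) ` ?L)" by (rule ssum_Sp[OF oc idem cL])
      also have "(\<lambda>g. peval g c) ` ?L = (\<lambda>g. Sp (?w ` g)) ` ?L"
      proof (rule image_cong[OF refl])
        fix g assume "g \<in> ?L"
        then have "is_sup (?w ` g) (sum ?w g)" using fin_sup[OF oc idem] fg by blast
        then show "peval g c = Sp (?w ` g)" unfolding peval_def using Sp_eq[OF oc idem] by metis
      qed
      also have "Sp \<dots> = Sp (\<Union>g\<in>?L. ?w ` g)"
        by (rule Sp_UN[OF oc idem cL, symmetric]) (use fg in \<open>auto intro: countable_finite\<close>)
      also have "(\<Union>g\<in>?L. ?w ` g) = ?w ` (\<Union>?L)" by auto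
      also have "\<Union>?L = yield ` Tk f 1 x"
      proof
        show "\<Union>?L \<subseteq> yield ` Tk f 1 x" using lin_sub_trees by fastforce
        show "yield ` Tk f 1 x \<subseteq> \<Union>?L"
        proof
          fix w assume "w \<in> yield ` Tk f 1 x"
          then obtain t where t: "t \<in> Tk f 1 x" "w = yield t" by auto
          then have "\<exists>g. lin_sub f x g \<and> yield t \<in> g"
            using trees_lin_sub[OF mono var] by (auto simp: Tk_def dtrees_def)
          then show "w \<in> \<Union>?L" using t by auto
        qed
      qed
      finally show "Mseq f 0 x c = Sp ((\<lambda>t. wval (yield t) c) ` Tk f (2^0) x)"
        by (simp add: image_image)
    qed
  next
    case (Suc n)
    show ?case
    proof (intro allI)
      fix x and c :: "'x \<Rightarrow> 's"
      let ?k = "2^n :: nat"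
      let ?A = "\<lambda>y. (\<lambda>s. wval (yield s) c) ` Tk f ?k y"
      let ?G = "\<lambda>t. (\<lambda>t'. wval (yield t') c) ` {t'. gr (Tk f ?k) t t'}"
      have gv: "countable (?G t) \<and> wval (yield t) (\<lambda>y. Sp (?A y)) = Sp (?G t)" for t
        by (rule graft_val[OF oc idem cT])
      have "Mseq f (Suc n) x c = Mseq f n x (\<lambda>y. Mseq f n y c)" by simp
      also have "(\<lambda>y. Mseq f n y c) = (\<lambda>y. Sp (?A y))" using Suc.IH by simp
      also have "Mseq f n x (\<lambda>y. Sp (?A y)) = Sp ((\<lambda>t. wval (yield t) (\<lambda>y. Sp (?A y))) ` Tk f ?k x)"
        using Suc.IH by blast
      also have "(\<lambda>t. wval (yield t) (\<lambda>y. Sp (?A y))) ` Tk f ?k x = (\<lambda>t. Sp (?G t)) ` Tk f ?k x"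
        using gv by simp
      also have "Sp \<dots> = Sp (\<Union>t\<in>Tk f ?k x. ?G t)"
        by (rule Sp_UN[OF oc idem cT, symmetric]) (use gv in blast)
      also have "(\<Union>t\<in>Tk f ?k x. ?G t) = (\<lambda>t'. wval (yield t') c) ` {t'. \<exists>t\<in>Tk f ?k x. gr (Tk f ?k) t t'}"
        by auto
      also have "{t'. \<exists>t\<in>Tk f ?k x. gr (Tk f ?k) t t'} = Tk f (2 * ?k) x" by (rule Tk_double)
      finally show "Mseq f (Suc n) x c = Sp ((\<lambda>t. wval (yield t) c) ` Tk f (2^Suc n) x)"
        by simp
    qed
  qed
  show ?thesis
  proof (intro allI ext)
    fix n x c
    have "ssum (\<lambda>t. wval (yield t) c) {t \<in> dtrees f x. dim t \<le> 2 ^ n} = ssum (\<lambda>t. wval (yield t) c) (Tk f (2^n) x)"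
      by (simp add: Tk_def)
    also have "\<dots> = Sp ((\<lambda>t. wval (yield t) c) ` Tk f (2^n) x)" by (rule ssum_Sp[OF oc idem cT])
    finally show "Mseq f n x c = ssum (\<lambda>t. wval (yield t) c) {t \<in> dtrees f x. dim t \<le> 2 ^ n}"
      using main by simp
  qed
qed


end
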